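(* Let $\Phi$ be a 2-CNF, and let $\Psi$ be obtained from $\Phi$ by adding a single clause $e$ on the same variable set. Then $$\big|\log Z(\hat\Phi)-\log Z(\hat\Psi)\big|\le|\mathcal N(\Phi,e)|\log 2.$$
   Context: A 2-CNF is a conjunction of clauses, each the disjunction of two literals on two distinct variables. $Z(\cdot)$ is the number of satisfying assignments. **Unit Clause Propagation.** For a 2-CNF $\Phi$ and a set $\mathcal L_0$ of literals, $\mathcal L(\Phi,\mathcal L_0)$ is the closure of $\mathcal L_0$ under: if $\Phi$ has a clause $l\vee\neg l'$ with $l'\in\mathcal L$, add $l$. **Pruning.** Conflict clauses $\mathcal C(\Phi,\mathcal L_0)$ are the clauses of $\Phi$ both of whose variables $x$ satisfy $x,\neg x\in\mathcal L(\Phi,\mathcal L_0)$. The pruned formula $\hat\Phi$ is $\Phi$ with all clauses of $\bigcup_l\mathcal C(\Phi,\{l\})$ removed, $l$ ranging over all literals. Pruned formulas are satisfiable. **The set $\mathcal N(\Phi,e)$.** For a variable $v$, $\mathcal N(\Phi,v)$ is the set of literals $l$ with $\{v,\neg v\}\cap\mathcal L(\Phi,\{l\})\ne\emptyset$. If $v,v'$ are the two variables of $e$, then $$\mathcal N(\Phi,e)=\bigcup_{l\in\mathcal N(\Phi,v)\cup\mathcal N(\Phi,v')}\mathcal L(\Phi,\{l\}),$$ a set of literals. *)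

theory Defs
  imports Complex_Main "HOL-Library.FuncSet"
begin

datatype 'v lit = Pos 'v | Neg 'v

fun var :: "'v lit \<Rightarrow> 'v" where
  "var (Pos x) = x" | "var (Neg x) = x"

fun neg :: "'v lit \<Rightarrow> 'v lit" where
  "neg (Pos x) = Neg x" | "neg (Neg x) = Pos x"

text \<open>A clause is the disjunction of two literals, represented as a pair (a, b) meaning a \<or> b.
  A 2-CNF is a (finite) set of clauses.\<close>
type_synonym 'v clause = "'v lit \<times> 'v lit"
type_synonym 'v cnf2 = "'v clause set"

definition is_clause :: "'v set \<Rightarrow> 'v clause \<Rightarrow> bool" where
  "is_clause V c \<longleftrightarrow> var (fst c) \<in> V \<and> var (snd c) \<in> V \<and> var (fst c) \<noteq> var (snd c)"

definition is_2cnf :: "'v set \<Rightarrow> 'v cnf2 \<Rightarrow> bool" where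
  "is_2cnf V \<Phi> \<longleftrightarrow> (\<forall>c\<in>\<Phi>. is_clause V c)"

fun lit_val :: "('v \<Rightarrow> bool) \<Rightarrow> 'v lit \<Rightarrow> bool" where
  "lit_val \<sigma> (Pos x) = \<sigma> x" | "lit_val \<sigma> (Neg x) = (\<not> \<sigma> x)"

definition satisfies :: "('v \<Rightarrow> bool) \<Rightarrow> 'v cnf2 \<Rightarrow> bool" where
  "satisfies \<sigma> \<Phi> \<longleftrightarrow> (\<forall>(a, b)\<in>\<Phi>. lit_val \<sigma> a \<or> lit_val \<sigma> b)"

definition Z :: "'v set \<Rightarrow> 'v cnf2 \<Rightarrow> nat" where
  "Z V \<Phi> = card {\<sigma> \<in> V \<rightarrow>\<^sub>E (UNIV :: bool set). satisfies \<sigma> \<Phi>}"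

inductive_set ucp :: "'v cnf2 \<Rightarrow> 'v lit set \<Rightarrow> 'v lit set" for \<Phi> L0 where
  base: "l \<in> L0 \<Longrightarrow> l \<in> ucp \<Phi> L0"
| step1: "(a, b) \<in> \<Phi> \<Longrightarrow> neg a \<in> ucp \<Phi> L0 \<Longrightarrow> b \<in> ucp \<Phi> L0"
| step2: "(a, b) \<in> \<Phi> \<Longrightarrow> neg b \<in> ucp \<Phi> L0 \<Longrightarrow> a \<in> ucp \<Phi> L0"

definition conflict :: "'v cnf2 \<Rightarrow> 'v lit set \<Rightarrow> 'v cnf2" where
  "conflict \<Phi> L0 = {c \<in> \<Phi>. \<forall>x \<in> {var (fst c), var (snd c)}.
       Pos x \<in> ucp \<Phi> L0 \<and> Neg x \<in> ucp \<Phi> L0}"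

definition prune :: "'v cnf2 \<Rightarrow> 'v cnf2" where
  "prune \<Phi> = \<Phi> - (\<Union>l. conflict \<Phi> {l})"

definition Nvar :: "'v cnf2 \<Rightarrow> 'v \<Rightarrow> 'v lit set" where
  "Nvar \<Phi> v = {l. {Pos v, Neg v} \<inter> ucp \<Phi> {l} \<noteq> {}}"

definition Nclause :: "'v cnf2 \<Rightarrow> 'v clause \<Rightarrow> 'v lit set" where
  "Nclause \<Phi> e = (\<Union>l \<in> Nvar \<Phi> (var (fst e)) \<union> Nvar \<Phi> (var (snd e)). ucp \<Phi> {l})"

end

theory Submission
  imports Defs
begin

lemma neg_neg[simp]: "neg (neg u) = u" by (cases u) auto
lemma var_neg[simp]: "var (neg u) = var u" by (cases u) auto
lemma neg_ne[simp]: "neg u \<noteq> u" by (cases u) auto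
lemma lit_val_neg[simp]: "lit_val \<sigma> (neg u) = (\<not> lit_val \<sigma> u)" by (cases u) auto
lemma lit_cases_var: "u = Pos (var u) \<or> u = Neg (var u)" by (cases u) auto
lemma same_var: "var w = var u \<Longrightarrow> w = u \<or> w = neg u"
  by (cases w; cases u) auto

lemma ucp_mono: "u \<in> ucp F L \<Longrightarrow> F \<subseteq> G \<Longrightarrow> u \<in> ucp G L"
  by (induction rule: ucp.induct) (auto intro: ucp.intros)

lemma ucp_trans: "u \<in> ucp F A \<Longrightarrow> A \<subseteq> ucp F B \<Longrightarrow> u \<in> ucp F B"
  by (induction rule: ucp.induct) (auto intro: ucp.intros)

lemma ucp_contra: "u \<in> ucp F {w} \<Longrightarrow> neg w \<in> ucp F {neg u}"
proof (induction rule: ucp.induct)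
  case (base l)
  then show ?case by (auto intro: ucp.base)
next
  case (step1 a b)
  have "a \<in> ucp F {neg b}" using step1(1) by (auto intro: ucp.intros)
  then show ?case using step1(3) ucp_trans[of "neg w" F "{a}" "{neg b}"] by simp
next
  case (step2 a b)
  have "b \<in> ucp F {neg a}" using step2(1) by (auto intro: ucp.intros)
  then show ?case using step2(3) ucp_trans[of "neg w" F "{b}" "{neg a}"] by simp
qed

lemma ucp_vars: "u \<in> ucp F {l} \<Longrightarrow> \<forall>c\<in>F. var (fst c) \<in> V \<and> var (snd c) \<in> V
   \<Longrightarrow> u = l \<or> (var u \<in> V \<and> var l \<in> V)"
proof (induction rule: ucp.induct)
  case (base l) then show ?case by auto
next
  case (step1 a b)
  then show ?case by (metis fst_conv snd_conv var_neg)
next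
  case (step2 a b)
  then show ?case by (metis fst_conv snd_conv var_neg)
qed

lemma twosat:
  "finite V \<Longrightarrow> \<forall>c\<in>F. var (fst c) \<in> V \<and> var (snd c) \<in> V
   \<Longrightarrow> \<forall>l. neg l \<notin> ucp F {l} \<Longrightarrow> \<exists>\<sigma>. satisfies \<sigma> F"
proof (induction "card V" arbitrary: V F rule: less_induct)
  case less
  show ?case
  proof (cases "V = {}")
    case True
    then have "F = {}" using less.prems(2) by auto
    then show ?thesis by (auto simp: satisfies_def)
  next
    case False
    then obtain x where xV: "x \<in> V" by auto
    define L where "L = ucp F {Pos x}"
    have cons: "neg u \<notin> L" if "u \<in> L" for u
    proof
      assume "neg u \<in> L"
      have "neg (Pos x) \<in> ucp F {neg u}" using ucp_contra[of u F "Pos x"] that L_def by simp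
      then have "neg (Pos x) \<in> L" using ucp_trans[of _ F "{neg u}" "{Pos x}"] \<open>neg u \<in> L\<close> L_def by auto
      then show False using less.prems(3) L_def by auto
    qed
    have clos1: "b \<in> L" if "(a,b) \<in> F" "neg a \<in> L" for a b
      using that L_def by (auto intro: ucp.step1)
    have clos2: "a \<in> L" if "(a,b) \<in> F" "neg b \<in> L" for a b
      using that L_def by (auto intro: ucp.step2)
    have Lvar: "var ` L \<subseteq> V"
    proof
      fix y assume "y \<in> var ` L"
      then obtain u where u: "u \<in> L" "y = var u" by blast
      then have "u = Pos x \<or> (var u \<in> V \<and> var (Pos x) \<in> V)"
        using ucp_vars[of u F "Pos x" V] less.prems(2) L_def by simp
      then show "y \<in> V" using xV u by auto
    qed
    define V' where "V' = V - var ` L"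
    define F' where "F' = {c\<in>F. var (fst c) \<notin> var ` L \<and> var (snd c) \<notin> var ` L}"
    have "x \<in> var ` L" using L_def by (force intro: ucp.base)
    then have "card V' < card V" unfolding V'_def using xV less.prems(1)
      by (intro psubset_card_mono) auto
    moreover have "finite V'" using less.prems(1) V'_def by auto
    moreover have "\<forall>c\<in>F'. var (fst c) \<in> V' \<and> var (snd c) \<in> V'"
      using less.prems(2) F'_def V'_def by auto
    moreover have "\<forall>l. neg l \<notin> ucp F' {l}"
      using less.prems(3) ucp_mono[of _ F' _ F] F'_def by blast
    ultimately obtain \<sigma>' where \<sigma>': "satisfies \<sigma>' F'" using less.hyps by blast
    define \<sigma> where "\<sigma> y = (if y \<in> var ` L then Pos y \<in> L else \<sigma>' y)" for y
    have Ltrue: "lit_val \<sigma> u" if "u \<in> L" for u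
    proof (cases u)
      case (Pos y) then show ?thesis using that \<sigma>_def by force
    next
      case (Neg y)
      have "Pos y \<notin> L" using cons[OF that] Neg by simp
      then show ?thesis using that \<sigma>_def Neg by force
    qed
    have agree: "lit_val \<sigma> u = lit_val \<sigma>' u" if "var u \<notin> var ` L" for u
      using that by (cases u) (auto simp: \<sigma>_def)
    have inL: "u \<in> L \<or> neg u \<in> L" if hu: "var u \<in> var ` L" for u
      proof -
      obtain w where "w \<in> L" "var w = var u" using hu by (metis imageE)
      then show ?thesis using same_var[of w u] by auto
    qed
    have cl: "lit_val \<sigma> a \<or> lit_val \<sigma> b" if ab: "(a,b) \<in> F" for a b
    proof (cases "var a \<in> var ` L \<or> var b \<in> var ` L")
      case True
      then show ?thesis using inL clos1[OF ab] clos2[OF ab] Ltrue by blast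
    next
      case False
      then have "(a,b) \<in> F'" using ab F'_def by auto
      then have "lit_val \<sigma>' a \<or> lit_val \<sigma>' b" using \<sigma>' unfolding satisfies_def by auto
      then show ?thesis using agree False by auto
    qed
    have "satisfies \<sigma> F" unfolding satisfies_def using cl by auto
    then show ?thesis by blast
  qed
qed

lemma conflict_iff: "c \<in> conflict F L \<longleftrightarrow> c \<in> F \<and>
   Pos (var (fst c)) \<in> ucp F L \<and> Neg (var (fst c)) \<in> ucp F L \<and>
   Pos (var (snd c)) \<in> ucp F L \<and> Neg (var (snd c)) \<in> ucp F L"
  unfolding conflict_def by auto

lemma both_pol: "u \<in> K \<Longrightarrow> neg u \<in> K \<Longrightarrow> Pos (var u) \<in> K \<and> Neg (var u) \<in> K"
  by (cases u) auto

lemma prune_sub: "prune F \<subseteq> F" unfolding prune_def by auto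

lemma prune_noncontra: "neg l \<notin> ucp (prune F) {l}"
proof
  let ?P = "prune F"
  let ?K = "ucp ?P {l}"
  assume h: "neg l \<in> ?K"
  have lK: "l \<in> ?K" by (auto intro: ucp.base)
  have KF: "?K \<subseteq> ucp F {l}" using ucp_mono prune_sub by blast
  from h show False
  proof (cases rule: ucp.cases)
    case base then show ?thesis by simp
  next
    case (step1 a)
    have "a \<in> ?K" using step1 lK by (auto intro: ucp.step2)
    then have "(a, neg l) \<in> conflict F {l}"
      using step1 both_pol[of a ?K] both_pol[of l ?K] lK h KF prune_sub
      unfolding conflict_iff by auto
    then show ?thesis using step1(1) unfolding prune_def by auto
  next
    case (step2 b)
    have "b \<in> ?K" using step2 lK by (auto intro: ucp.step1)
    then have "(neg l, b) \<in> conflict F {l}"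
      using step2 both_pol[of b ?K] both_pol[of l ?K] lK h KF prune_sub
      unfolding conflict_iff by auto
    then show ?thesis using step2(1) unfolding prune_def by auto
  qed
qed

lemma lit_val_restrict: "var u \<in> V \<Longrightarrow> lit_val (restrict \<sigma> V) u = lit_val \<sigma> u"
  by (cases u) auto

lemma prune_sat:
  assumes "finite V" "\<forall>c\<in>F. var (fst c) \<in> V \<and> var (snd c) \<in> V"
  shows "\<exists>\<tau>. satisfies \<tau> (prune F)" "Z V (prune F) \<ge> 1"
proof -
  have pv: "\<forall>c\<in>prune F. var (fst c) \<in> V \<and> var (snd c) \<in> V" using assms(2) prune_sub by blast
  obtain \<sigma> where s: "satisfies \<sigma> (prune F)"
    using twosat[OF assms(1) pv] prune_noncontra by blast
  then show "\<exists>\<tau>. satisfies \<tau> (prune F)" by blast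
  have "satisfies (restrict \<sigma> V) (prune F)"
    using s pv lit_val_restrict unfolding satisfies_def by fastforce
  then have "restrict \<sigma> V \<in> {\<sigma> \<in> V \<rightarrow>\<^sub>E (UNIV :: bool set). satisfies \<sigma> (prune F)}" by auto
  moreover have "finite {\<sigma> \<in> V \<rightarrow>\<^sub>E (UNIV :: bool set). satisfies \<sigma> (prune F)}"
    using assms(1) by (simp add: finite_PiE)
  ultimately show "Z V (prune F) \<ge> 1" unfolding Z_def
    by (metis One_nat_def Suc_leI card_gt_0_iff empty_iff)
qed

lemma transfer:
  assumes finV: "finite V"
    and NV: "var ` N \<subseteq> V"
    and Wdef: "W = {x. Pos x \<in> N \<and> Neg x \<in> N}"
    and diff: "\<And>c. c \<in> T \<Longrightarrow> c \<notin> S \<Longrightarrow> var (fst c) \<in> W \<and> var (snd c) \<in> W"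
    and closT: "\<And>a b. (a,b) \<in> T \<Longrightarrow> (neg a \<in> N \<longrightarrow> b \<in> N) \<and> (neg b \<in> N \<longrightarrow> a \<in> N)"
    and tau: "satisfies \<tau> T"
  shows "Z V S \<le> 2 ^ card (var ` N) * Z V T"
proof -
  define U where "U = var ` N"
  define A where "A = {\<sigma> \<in> V \<rightarrow>\<^sub>E (UNIV :: bool set). satisfies \<sigma> S}"
  define B where "B = {\<sigma> \<in> V \<rightarrow>\<^sub>E (UNIV :: bool set). satisfies \<sigma> T}"
  define f where "f \<sigma> = (\<lambda>y. if y \<in> V then (if y \<in> U then (if y \<in> W then \<tau> y else Pos y \<in> N) else \<sigma> y) else undefined)" for \<sigma> :: "'a \<Rightarrow> bool"
  define g where "g \<sigma> = (f \<sigma>, restrict \<sigma> U)" for \<sigma>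
  have UV: "U \<subseteq> V" using NV U_def by auto
  have WU: "W \<subseteq> U" unfolding Wdef U_def by (force)
  have Wlit: "var u \<in> W \<longleftrightarrow> u \<in> N \<and> neg u \<in> N" for u
    using Wdef by (cases u) auto
  have inU: "var u \<in> U \<Longrightarrow> u \<in> N \<or> neg u \<in> N" for u
  proof -
    assume "var u \<in> U"
    then obtain w where "w \<in> N" "var w = var u" unfolding U_def by (metis imageE)
    then show ?thesis using same_var[of w u] by auto
  qed
  have fW: "lit_val (f \<sigma>) u = lit_val \<tau> u" if "var u \<in> W" for \<sigma> u
    using that WU UV by (cases u) (auto simp: f_def)
  have fN: "lit_val (f \<sigma>) u" if "u \<in> N" "var u \<notin> W" for \<sigma> u
  proof (cases u)
    case (Pos y)
    then have "y \<in> U" "y \<in> V" using that UV U_def by force+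
    then show ?thesis using that Pos by (auto simp: f_def)
  next
    case (Neg y)
    then have "y \<in> U" "y \<in> V" using that UV U_def by force+
    moreover have "Pos y \<notin> N" using that Neg Wdef by auto
    ultimately show ?thesis using that Neg by (auto simp: f_def)
  qed
  have fOut: "lit_val (f \<sigma>) u = lit_val \<sigma> u" if "var u \<notin> U" "\<sigma> \<in> V \<rightarrow>\<^sub>E (UNIV :: bool set)" for \<sigma> u
  proof -
    have "f \<sigma> (var u) = \<sigma> (var u)" using that unfolding f_def by (auto simp: PiE_def extensional_def)
    then show ?thesis by (cases u) auto
  qed
  have fsat: "satisfies (f \<sigma>) T" if "\<sigma> \<in> A" for \<sigma>
  proof -
    have sP: "\<sigma> \<in> V \<rightarrow>\<^sub>E (UNIV :: bool set)" "satisfies \<sigma> S" using that A_def by auto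
    have "lit_val (f \<sigma>) p \<or> lit_val (f \<sigma>) q" if pq: "(p,q) \<in> T" for p q
    proof -
      have cl: "neg p \<in> N \<Longrightarrow> q \<in> N" "neg q \<in> N \<Longrightarrow> p \<in> N" using closT[OF pq] by auto
      have tv: "lit_val \<tau> p \<or> lit_val \<tau> q" using tau pq unfolding satisfies_def by auto
      show ?thesis
      proof (cases "(p \<in> N \<and> var p \<notin> W) \<or> (q \<in> N \<and> var q \<notin> W)")
        case True then show ?thesis using fN by blast
      next
        case F1: False
        show ?thesis
        proof (cases "var p \<in> W \<and> var q \<in> W")
          case True then show ?thesis using fW tv by auto
        next
          case F2: False
          have "var p \<notin> U"
          proof
            assume "var p \<in> U"
            then have "p \<in> N \<or> neg p \<in> N" using inU by blast
            then have "neg p \<in> N" using F1 Wlit by blast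
            then have "q \<in> N" using cl by blast
            then have "var q \<in> W" using F1 by blast
            then have "p \<in> N" using cl Wlit by blast
            then show False using F1 F2 Wlit \<open>var q \<in> W\<close> by blast
          qed
          moreover have "var q \<notin> U"
          proof
            assume "var q \<in> U"
            then have "q \<in> N \<or> neg q \<in> N" using inU by blast
            then have "neg q \<in> N" using F1 Wlit by blast
            then have "p \<in> N" using cl by blast
            then have "var p \<in> W" using F1 by blast
            then have "q \<in> N" using cl Wlit by blast
            then show False using F1 F2 Wlit \<open>var p \<in> W\<close> by blast
          qed
          ultimately have "(p,q) \<in> S" using diff[OF pq] WU by auto
          then have "lit_val \<sigma> p \<or> lit_val \<sigma> q" using sP unfolding satisfies_def by auto
          then show ?thesis using fOut[OF _ sP(1)] \<open>var p \<notin> U\<close> \<open>var q \<notin> U\<close> by auto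
        qed
      qed
    qed
    then show ?thesis unfolding satisfies_def by auto
  qed
  have fPi: "f \<sigma> \<in> V \<rightarrow>\<^sub>E (UNIV :: bool set)" for \<sigma>
    unfolding f_def by (auto simp: PiE_def extensional_def)
  have gmap: "g ` A \<subseteq> B \<times> (U \<rightarrow>\<^sub>E (UNIV :: bool set))"
    using fsat fPi unfolding g_def B_def by auto
  have ginj: "inj_on g A"
  proof (rule inj_onI)
    fix s1 s2 assume s: "s1 \<in> A" "s2 \<in> A" "g s1 = g s2"
    then have e1: "f s1 = f s2" and e2: "restrict s1 U = restrict s2 U" unfolding g_def by auto
    show "s1 = s2"
    proof
      fix y
      show "s1 y = s2 y"
      proof (cases "y \<in> V")
        case False then show ?thesis using s(1,2) unfolding A_def by (auto simp: PiE_def extensional_def)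
      next
        case True
        show ?thesis
        proof (cases "y \<in> U")
          case True then show ?thesis using e2 by (metis restrict_apply')
        next
          case False
          then have "f s1 y = s1 y" "f s2 y = s2 y" using \<open>y \<in> V\<close> by (simp_all add: f_def)
          then show ?thesis using e1 by simp
        qed
      qed
    qed
  qed
  have finB: "finite B" unfolding B_def using finV by (simp add: finite_PiE)
  have finU: "finite U" using UV finV finite_subset by blast
  have "card A \<le> card (B \<times> (U \<rightarrow>\<^sub>E (UNIV :: bool set)))"
    using card_inj_on_le[OF ginj gmap] finB finU by (simp add: finite_PiE)
  also have "\<dots> = card B * 2 ^ card U"
    using finU by (simp add: card_cartesian_product card_PiE)
  finally show ?thesis unfolding Z_def A_def B_def U_def by (simp add: mult.commute)
qed

lemma log_bound:
  fixes z1 z2 k :: nat and n :: nat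
  assumes "z1 \<ge> 1" "z2 \<ge> 1" "z1 \<le> 2 ^ k * z2" "z2 \<le> 2 ^ k * z1" "k \<le> n"
  shows "\<bar>ln (real z1) - ln (real z2)\<bar> \<le> real n * ln 2"
proof -
  have p1: "real z1 > 0" "real z2 > 0" using assms by auto
  have a: "ln (real z1) \<le> real k * ln 2 + ln (real z2)"
  proof -
    have "real z1 \<le> real (2 ^ k * z2)" using assms(3) of_nat_le_iff by blast
    then have "real z1 \<le> 2 ^ k * real z2" by simp
    then have "ln (real z1) \<le> ln (2 ^ k * real z2)" using p1 by simp
    also have "\<dots> = real k * ln 2 + ln (real z2)" using p1 by (simp add: ln_mult ln_realpow)
    finally show ?thesis .
  qed
  have b: "ln (real z2) \<le> real k * ln 2 + ln (real z1)"
  proof -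
    have "real z2 \<le> real (2 ^ k * z1)" using assms(4) of_nat_le_iff by blast
    then have "real z2 \<le> 2 ^ k * real z1" by simp
    then have "ln (real z2) \<le> ln (2 ^ k * real z1)" using p1 by simp
    also have "\<dots> = real k * ln 2 + ln (real z1)" using p1 by (simp add: ln_mult ln_realpow)
    finally show ?thesis .
  qed
  have "real k * ln 2 \<le> real n * ln 2" using assms(5) by (simp add: mult_right_mono)
  then show ?thesis using a b by linarith
qed

theorem lemma11p1:
  fixes V :: "'v set" and \<Phi> :: "'v cnf2" and e :: "'v clause"
  assumes "finite V"
    and "is_2cnf V \<Phi>"
    and "is_clause V e"
  shows "\<bar>ln (real (Z V (prune \<Phi>))) - ln (real (Z V (prune (insert e \<Phi>))))\<bar>
           \<le> real (card (Nclause \<Phi> e)) * ln 2"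
proof -
  obtain a0 b0 where e: "e = (a0, b0)" by (cases e)
  define v where "v = var a0"
  define v' where "v' = var b0"
  define \<Psi> where "\<Psi> = insert e \<Phi>"
  define NV where "NV = Nvar \<Phi> v \<union> Nvar \<Phi> v'"
  define N where "N = Nclause \<Phi> e"
  define W where "W = {x. Pos x \<in> N \<and> Neg x \<in> N}"
  have PhiV: "\<forall>c\<in>\<Phi>. var (fst c) \<in> V \<and> var (snd c) \<in> V"
    using assms(2) unfolding is_2cnf_def is_clause_def by auto
  have eV: "v \<in> V" "v' \<in> V" using assms(3) e v_def v'_def unfolding is_clause_def by auto
  have PsiV: "\<forall>c\<in>\<Psi>. var (fst c) \<in> V \<and> var (snd c) \<in> V"
    using PhiV eV e v_def v'_def \<Psi>_def by auto
  have Ndef: "N = (\<Union>l\<in>NV. ucp \<Phi> {l})" unfolding N_def NV_def Nclause_def e v_def v'_def by simp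
  have N_clos: "(neg p \<in> N \<longrightarrow> q \<in> N) \<and> (neg q \<in> N \<longrightarrow> p \<in> N)" if "(p,q) \<in> \<Phi>" for p q
    using that unfolding Ndef by (blast intro: ucp.step1 ucp.step2)
  have lit_in: "u \<in> N" if "var u = v \<or> var u = v'" for u
  proof -
    have uu: "u \<in> ucp \<Phi> {u}" by (rule ucp.base) simp
    then have "u \<in> NV" using that lit_cases_var[of u] unfolding NV_def Nvar_def by auto
    then show ?thesis using uu unfolding Ndef by blast
  qed
  have a0N: "a0 \<in> N" "neg a0 \<in> N" "b0 \<in> N" "neg b0 \<in> N" using lit_in v_def v'_def by auto
  have vW: "v \<in> W" "v' \<in> W" using lit_in unfolding W_def by auto
  have NVV: "var ` N \<subseteq> V"
  proof
    fix y assume "y \<in> var ` N"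
    then obtain u l where ul: "l \<in> NV" "u \<in> ucp \<Phi> {l}" "y = var u" unfolding Ndef by blast
    have "var l \<in> V"
    proof -
      have aux: "var l \<in> V" if "w \<in> ucp \<Phi> {l}" "var w \<in> V" for w
        using ucp_vars[OF that(1) PhiV] that(2) by auto
      have "Pos v \<in> ucp \<Phi> {l} \<or> Neg v \<in> ucp \<Phi> {l} \<or> Pos v' \<in> ucp \<Phi> {l} \<or> Neg v' \<in> ucp \<Phi> {l}"
        using ul(1) unfolding NV_def Nvar_def by auto
      then show ?thesis using aux eV by (metis var.simps(1) var.simps(2))
    qed
    then show "y \<in> V" using ucp_vars[OF ul(2) PhiV] ul(3) by auto
  qed
  have finN: "finite N"
  proof (rule finite_subset)
    show "N \<subseteq> Pos ` V \<union> Neg ` V"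
    proof
      fix u assume "u \<in> N"
      then have "var u \<in> V" using NVV by auto
      then show "u \<in> Pos ` V \<union> Neg ` V" using lit_cases_var[of u] by (metis UnI1 UnI2 image_eqI)
    qed
    show "finite (Pos ` V \<union> Neg ` V)" using assms(1) by simp
  qed
  have ucp_small: "u \<in> ucp \<Phi> {l}" if h1: "u \<in> ucp \<Psi> {l}" and h2: "l \<notin> NV" for u l
    using h1
  proof (induction rule: ucp.induct)
    case (base l') then show ?case by (auto intro: ucp.base)
  next
    case (step1 a b)
    show ?case
    proof (cases "(a,b) \<in> \<Phi>")
      case True then show ?thesis using step1 by (auto intro: ucp.step1)
    next
      case False
      then have "a = a0" using step1(1) \<Psi>_def e by auto
      moreover have "neg a0 = Pos v \<or> neg a0 = Neg v" using lit_cases_var[of "neg a0"] v_def by simp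
      ultimately have "l \<in> Nvar \<Phi> v" using step1(3) unfolding Nvar_def by auto
      then show ?thesis using h2 NV_def by auto
    qed
  next
    case (step2 a b)
    show ?case
    proof (cases "(a,b) \<in> \<Phi>")
      case True then show ?thesis using step2 by (auto intro: ucp.step2)
    next
      case False
      then have "b = b0" using step2(1) \<Psi>_def e by auto
      moreover have "neg b0 = Pos v' \<or> neg b0 = Neg v'" using lit_cases_var[of "neg b0"] v'_def by simp
      ultimately have "l \<in> Nvar \<Phi> v'" using step2(3) unfolding Nvar_def by auto
      then show ?thesis using h2 NV_def by auto
    qed
  qed
  have ucp_big: "u \<in> N" if h1: "u \<in> ucp \<Psi> {l}" and h2: "l \<in> NV" for u l
    using h1
  proof (induction rule: ucp.induct)
    case (base l')
    then have "l' \<in> ucp \<Phi> {l}" by (auto intro: ucp.base)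
    then show ?case using h2 unfolding Ndef by blast
  next
    case (step1 a b)
    then show ?case using N_clos a0N \<Psi>_def e by auto
  next
    case (step2 a b)
    then show ?case using N_clos a0N \<Psi>_def e by auto
  qed
  have PhiPsi: "\<Phi> \<subseteq> \<Psi>" unfolding \<Psi>_def by auto
  have diffA: "var (fst c) \<in> W \<and> var (snd c) \<in> W" if h1: "c \<in> prune \<Psi>" and h2: "c \<notin> prune \<Phi>" for c
  proof (cases "c = e")
    case True then show ?thesis using vW e v_def v'_def by auto
  next
    case False
    then have "c \<in> \<Phi>" using h1 prune_sub \<Psi>_def by blast
    then obtain l where "c \<in> conflict \<Phi> {l}" using h2 unfolding prune_def by auto
    then have "c \<in> conflict \<Psi> {l}" using PhiPsi ucp_mono[of _ \<Phi> "{l}" \<Psi>] unfolding conflict_iff by blast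
    then show ?thesis using h1 unfolding prune_def by auto
  qed
  have diffB: "var (fst c) \<in> W \<and> var (snd c) \<in> W" if h1: "c \<in> prune \<Phi>" and h2: "c \<notin> prune \<Psi>" for c
  proof -
    have cP: "c \<in> \<Phi>" using h1 prune_sub by blast
    then obtain l where cl: "c \<in> conflict \<Psi> {l}" using h2 PhiPsi unfolding prune_def by auto
    show ?thesis
    proof (cases "l \<in> NV")
      case True
      then show ?thesis using cl ucp_big unfolding conflict_iff W_def by blast
    next
      case False
      then have "c \<in> conflict \<Phi> {l}" using cl cP ucp_small unfolding conflict_iff by blast
      then show ?thesis using h1 unfolding prune_def by auto
    qed
  qed
  have closPsi: "(neg p \<in> N \<longrightarrow> q \<in> N) \<and> (neg q \<in> N \<longrightarrow> p \<in> N)" if "(p,q) \<in> \<Psi>" for p q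
  proof (cases "(p,q) = e")
    case True then show ?thesis using a0N e by auto
  next
    case False then show ?thesis using that N_clos \<Psi>_def by auto
  qed
  obtain \<tau>1 where t1: "satisfies \<tau>1 (prune \<Phi>)" using prune_sat(1)[OF assms(1) PhiV] by blast
  obtain \<tau>2 where t2: "satisfies \<tau>2 (prune \<Psi>)" using prune_sat(1)[OF assms(1) PsiV] by blast
  have z1: "Z V (prune \<Phi>) \<ge> 1" using prune_sat(2)[OF assms(1) PhiV] .
  have z2: "Z V (prune \<Psi>) \<ge> 1" using prune_sat(2)[OF assms(1) PsiV] .
  have i1: "Z V (prune \<Phi>) \<le> 2 ^ card (var ` N) * Z V (prune \<Psi>)"
  proof (rule transfer[OF assms(1) NVV W_def])
    show "var (fst c) \<in> W \<and> var (snd c) \<in> W" if "c \<in> prune \<Psi>" "c \<notin> prune \<Phi>" for c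
      using diffA that by blast
    show "(neg a \<in> N \<longrightarrow> b \<in> N) \<and> (neg b \<in> N \<longrightarrow> a \<in> N)" if "(a,b) \<in> prune \<Psi>" for a b
      using closPsi that prune_sub by blast
    show "satisfies \<tau>2 (prune \<Psi>)" by (rule t2)
  qed
  have i2: "Z V (prune \<Psi>) \<le> 2 ^ card (var ` N) * Z V (prune \<Phi>)"
  proof (rule transfer[OF assms(1) NVV W_def])
    show "var (fst c) \<in> W \<and> var (snd c) \<in> W" if "c \<in> prune \<Phi>" "c \<notin> prune \<Psi>" for c
      using diffB that by blast
    show "(neg a \<in> N \<longrightarrow> b \<in> N) \<and> (neg b \<in> N \<longrightarrow> a \<in> N)" if "(a,b) \<in> prune \<Phi>" for a b
      using closPsi that prune_sub PhiPsi by blast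
    show "satisfies \<tau>1 (prune \<Phi>)" by (rule t1)
  qed
  have k: "card (var ` N) \<le> card N" using finN by (rule card_image_le)
  show ?thesis using log_bound[OF z1 z2 i1 i2 k] unfolding N_def \<Psi>_def by simp
qed

end
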